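(* Let $(\Xi,\mathcal{F},P)$ be a probability space and $\{y_t\}_{t\in\mathbb{Z}}$ a real, mean-zero, covariance-stationary series on it; put $\mathcal{F}_t=\sigma(y_s,\,s\le t)$. Assume (D1) $P\{y_1^2>0\}=1$; (D2) $y_t=\sum_{s=0}^{\infty}\kappa_s\epsilon_{t-s}$ with $\kappa_0=1$, $\sum_s|\kappa_s|<\infty$, $\kappa(z)=\sum_s\kappa_s z^s\neq 0$ for $|z|\le 1$, where $\{\epsilon_t\}$ is a martingale difference sequence with respect to $\{\mathcal{F}_t\}$; (D3) $E[\epsilon_t^2\mid\mathcal{F}_{t-1}]=\sigma_\epsilon^2$ a.s. (constant); (D4) $\sup_t|\epsilon_t|\le K<\infty$ a.s. Fix $\beta\in[0,1]$, let $\theta_t,\phi_t$ be generated by the recursive algorithm in the context, and assume there are random variables $k^*$ (integer, $0\le k^*<\infty$) and $K^*\in(0,1)$ such that a.s. $|\theta_{t+k^*}|\le K^*$ for all $t\ge1$. Then for each integer $u\ge0$, $$\frac1t\sum_{s=1}^t\phi_s^2=\frac1t\sum_{s=1}^t\Big(\sum_{j=0}^u\kappa_j^\phi(s)\epsilon_{s-j}\Big)^2+r_1(t,u),$$ where almost surely $\lim_{u\to\infty}\limsup_{t\to\infty}|r_1(t,u)|=0$.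
   Context: Recursive algorithm: set $\theta_1=0$, $\bar P_1=0$, $e_1=y_1$, $x_1=y_1$, $\phi_1=x_1$, and for $t\ge2$: $x_t=y_t-\beta\theta_{t-1}x_{t-1}$; $e_t=y_t-\theta_{t-1}e_{t-1}$; $\phi_t=x_t-\theta_{t-1}\phi_{t-1}$; $\bar P_t=\frac1t\sum_{s=1}^{t-1}\phi_s^2$; $\theta_t=\theta_{t-1}+\bar P_t^{-1}\frac1t\phi_{t-1}e_t$. Coefficients: for $t\ge1$, $j\ge0$ (empty products equal 1), $\kappa_j^x(t)=\sum_{l=0}^{\min(j,t-1)}(-\beta)^l\kappa_{j-l}\prod_{i=1}^l\theta_{t-i}$; $\kappa_j^\phi(1)=\kappa_j$ and $\kappa_j^\phi(t)=\kappa_j^x(t)-\theta_{t-1}\kappa_{j-1}^\phi(t-1)$ for $t\ge2$, with $\kappa_{-1}^\phi(\cdot):=0$; these are the coefficients in $\phi_t=\sum_{j\ge0}\kappa_j^\phi(t)\epsilon_{t-j}$. *)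

theory Defs
  imports "HOL-Probability.Probability"
begin

definition nat_filtration :: "'a measure \<Rightarrow> (int \<Rightarrow> 'a \<Rightarrow> real) \<Rightarrow> int \<Rightarrow> 'a measure" where
  "nat_filtration M y t =
     sigma (space M) {y s -` B \<inter> space M | s B. s \<le> t \<and> B \<in> sets borel}"

text \<open>The recursive algorithm. State at time t \<ge> 1 is
  (theta_t, e_t, x_t, phi_t, S_t) with S_t = sum_{s=1}^t phi_s^2,
  so that Pbar_t = S_{t-1} / t. Index 0 is a dummy.\<close>
fun rls :: "real \<Rightarrow> (nat \<Rightarrow> real) \<Rightarrow> nat \<Rightarrow> real \<times> real \<times> real \<times> real \<times> real" where
  "rls \<beta> y 0 = (0, 0, 0, 0, 0)"
| "rls \<beta> y (Suc 0) = (0, y 1, y 1, y 1, (y 1)\<^sup>2)"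
| "rls \<beta> y (Suc (Suc n)) =
    (let t = Suc (Suc n);
         (\<theta>p, ep, xp, \<phi>p, Sp) = rls \<beta> y (Suc n);
         x = y t - \<beta> * \<theta>p * xp;
         e = y t - \<theta>p * ep;
         \<phi> = x - \<theta>p * \<phi>p;
         Pbar = Sp / real t;
         \<theta> = \<theta>p + inverse Pbar * (1 / real t) * \<phi>p * e
     in (\<theta>, e, x, \<phi>, Sp + \<phi>\<^sup>2))"

definition rls_theta :: "real \<Rightarrow> (nat \<Rightarrow> real) \<Rightarrow> nat \<Rightarrow> real" where
  "rls_theta \<beta> y t = (case rls \<beta> y t of (\<theta>, e, x, \<phi>, S) \<Rightarrow> \<theta>)"

definition rls_phi :: "real \<Rightarrow> (nat \<Rightarrow> real) \<Rightarrow> nat \<Rightarrow> real" where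
  "rls_phi \<beta> y t = (case rls \<beta> y t of (\<theta>, e, x, \<phi>, S) \<Rightarrow> \<phi>)"

definition kappa_x :: "real \<Rightarrow> (nat \<Rightarrow> real) \<Rightarrow> (nat \<Rightarrow> real) \<Rightarrow> nat \<Rightarrow> nat \<Rightarrow> real" where
  "kappa_x \<beta> \<kappa> \<theta> t j =
     (\<Sum>l = 0..min j (t - 1). (- \<beta>) ^ l * \<kappa> (j - l) * (\<Prod>i = 1..l. \<theta> (t - i)))"

fun kappa_phi :: "real \<Rightarrow> (nat \<Rightarrow> real) \<Rightarrow> (nat \<Rightarrow> real) \<Rightarrow> nat \<Rightarrow> nat \<Rightarrow> real" where
  "kappa_phi \<beta> \<kappa> \<theta> 0 j = 0"
| "kappa_phi \<beta> \<kappa> \<theta> (Suc 0) j = \<kappa> j"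
| "kappa_phi \<beta> \<kappa> \<theta> (Suc (Suc n)) j =
     kappa_x \<beta> \<kappa> \<theta> (Suc (Suc n)) j
     - \<theta> (Suc n) * (if j = 0 then 0 else kappa_phi \<beta> \<kappa> \<theta> (Suc n) (j - 1))"

end

theory Submission
  imports Defs
begin


definition rls_x :: "real \<Rightarrow> (nat \<Rightarrow> real) \<Rightarrow> nat \<Rightarrow> real" where
  "rls_x \<beta> y t = (case rls \<beta> y t of (\<theta>, e, x, \<phi>, S) \<Rightarrow> x)"

lemma rls_1: "rls_theta \<beta> y (Suc 0) = 0" "rls_x \<beta> y (Suc 0) = y 1" "rls_phi \<beta> y (Suc 0) = y 1"
  "rls_theta \<beta> y 0 = 0"
  by (simp_all add: rls_theta_def rls_x_def rls_phi_def)

lemma rls_SS: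
  "rls_x \<beta> y (Suc (Suc n)) = y (Suc (Suc n)) - \<beta> * rls_theta \<beta> y (Suc n) * rls_x \<beta> y (Suc n)"
  "rls_phi \<beta> y (Suc (Suc n)) = rls_x \<beta> y (Suc (Suc n)) - rls_theta \<beta> y (Suc n) * rls_phi \<beta> y (Suc n)"
  by (cases "rls \<beta> y (Suc n)" rule: prod_cases5;
      simp add: rls_theta_def rls_x_def rls_phi_def Let_def)+

definition convS :: "(nat \<Rightarrow> real) \<Rightarrow> (nat \<Rightarrow> nat \<Rightarrow> real) \<Rightarrow> nat \<Rightarrow> nat \<Rightarrow> real" where
  "convS q G t j = (\<Sum>l = 0..min j (t - 1). (\<Prod>i = 1..l. q (t - i)) * G (t - l) (j - l))"

lemma convS_1: "convS q G (Suc 0) j = G (Suc 0) j"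
  by (simp add: convS_def)

lemma convS_Suc:
  assumes "1 \<le> t"
  shows "convS q G (Suc t) j = G (Suc t) j + q t * (if j = 0 then 0 else convS q G t (j - 1))"
proof (cases j)
  case 0
  then show ?thesis by (simp add: convS_def)
next
  case (Suc j')
  obtain t' where t: "t = Suc t'" using assms by (cases t) auto
  have "convS q G (Suc t) j = (\<Sum>l = 0..Suc (min j' t'). (\<Prod>i = 1..l. q (Suc t - i)) * G (Suc t - l) (Suc j' - l))"
    by (simp add: convS_def Suc t)
  also have "\<dots> = G (Suc t) j + (\<Sum>l = 0..min j' t'. (\<Prod>i = 1..Suc l. q (Suc t - i)) * G (t - l) (j' - l))"
    by (subst sum.atLeast0_atMost_Suc_shift) (simp add: Suc)
  also have "(\<Sum>l = 0..min j' t'. (\<Prod>i = 1..Suc l. q (Suc t - i)) * G (t - l) (j' - l))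
     = q t * (\<Sum>l = 0..min j' t'. (\<Prod>i = 1..l. q (t - i)) * G (t - l) (j' - l))"
  proof -
    have "(\<Prod>i = 1..Suc l. q (Suc t - i)) = q t * (\<Prod>i = 1..l. q (t - i))" for l
    proof -
      have "(\<Prod>i = 1..Suc l. q (Suc t - i)) = q t * (\<Prod>i = Suc 1..Suc l. q (Suc t - i))"
        by (subst prod.atLeast_Suc_atMost) auto
      also have "(\<Prod>i = Suc 1..Suc l. q (Suc t - i)) = (\<Prod>i = 1..l. q (t - i))"
        by (subst prod.atLeast_Suc_atMost_Suc_shift) (simp add: comp_def)
      finally show ?thesis .
    qed
    then show ?thesis by (simp add: sum_distrib_left mult.assoc)
  qed
  finally show ?thesis by (simp add: convS_def Suc t)
qed

lemma kappa_x_convS: "kappa_x \<beta> \<kappa> \<theta> t j = convS (\<lambda>k. - \<beta> * \<theta> k) (\<lambda>_ j. \<kappa> j) t j"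
  unfolding kappa_x_def convS_def
proof (intro sum.cong refl)
  fix l
  have "(\<Prod>i = 1..l. - \<beta> * \<theta> (t - i)) = (- \<beta>) ^ l * (\<Prod>i = 1..l. \<theta> (t - i))"
    by (simp only: prod.distrib prod_constant) simp
  then show "(- \<beta>) ^ l * \<kappa> (j - l) * (\<Prod>i = 1..l. \<theta> (t - i)) =
      (\<Prod>i = 1..l. - \<beta> * \<theta> (t - i)) * \<kappa> (j - l)" by simp
qed

lemma kappa_x_1: "kappa_x \<beta> \<kappa> \<theta> (Suc 0) j = \<kappa> j"
  by (simp add: kappa_x_convS convS_1)

lemma kappa_x_Suc: "1 \<le> t \<Longrightarrow> kappa_x \<beta> \<kappa> \<theta> (Suc t) j =
   \<kappa> j + (- \<beta> * \<theta> t) * (if j = 0 then 0 else kappa_x \<beta> \<kappa> \<theta> t (j - 1))"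
  by (simp add: kappa_x_convS convS_Suc)

lemma kappa_phi_convS: "1 \<le> t \<Longrightarrow> kappa_phi \<beta> \<kappa> \<theta> t j = convS (\<lambda>k. - \<theta> k) (kappa_x \<beta> \<kappa> \<theta>) t j"
proof (induction t arbitrary: j rule: nat_induct_at_least)
  case base
  then show ?case by (simp add: convS_1 kappa_x_1)
next
  case (Suc n)
  then obtain m where n: "n = Suc m" by (cases n) auto
  show ?case using Suc by (simp add: n convS_Suc)
qed

lemma sums_shift0: "(h::nat\<Rightarrow>real) sums s \<Longrightarrow> (\<lambda>j. if j = 0 then 0 else h (j - 1)) sums s"
proof -
  assume h: "h sums s"
  have "(\<lambda>n. (\<lambda>j. if j = 0 then 0 else h (j - 1)) (Suc n)) sums s" using h by simp
  then show ?thesis by (subst (asm) sums_Suc_iff) simp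
qed

lemma rep_step:
  fixes e :: "int \<Rightarrow> real"
  assumes A: "(\<lambda>j. A j * e (int (Suc t) - int j)) sums a"
    and B: "(\<lambda>j. c j * e (int t - int j)) sums b"
    and C: "\<And>j. c' j = A j + q * (if j = 0 then 0 else c (j - 1))"
  shows "(\<lambda>j. c' j * e (int (Suc t) - int j)) sums (a + q * b)"
proof -
  have "(\<lambda>j. A j * e (int (Suc t) - int j) + q * (if j = 0 then 0 else c (j - 1) * e (int t - int (j - 1)))) sums (a + q * b)"
    by (intro sums_add sums_mult sums_shift0[of "\<lambda>j. c j * e (int t - int j)"] A B)
  moreover have "(\<lambda>j. A j * e (int (Suc t) - int j) + q * (if j = 0 then 0 else c (j - 1) * e (int t - int (j - 1))))
     = (\<lambda>j. c' j * e (int (Suc t) - int j))"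
  proof
    fix j show "A j * e (int (Suc t) - int j) + q * (if j = 0 then 0 else c (j - 1) * e (int t - int (j - 1)))
     = c' j * e (int (Suc t) - int j)"
      by (cases j) (auto simp: C algebra_simps)
  qed
  ultimately show ?thesis by simp
qed



lemma rep_x:
  fixes e yy :: "int \<Rightarrow> real"
  assumes MA: "\<And>t. (\<lambda>s. \<kappa> s * e (t - int s)) sums yy t" and t: "1 \<le> t"
  shows "(\<lambda>j. kappa_x \<beta> \<kappa> (rls_theta \<beta> (\<lambda>n. yy (int n))) t j * e (int t - int j))
           sums rls_x \<beta> (\<lambda>n. yy (int n)) t"
  using t
proof (induction t rule: nat_induct_at_least)
  case base
  then show ?case using MA[of 1] by (simp add: kappa_x_1 rls_1)
next
  case (Suc n)
  then obtain m where n: "n = Suc m" by (cases n) auto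
  have "(\<lambda>j. kappa_x \<beta> \<kappa> (rls_theta \<beta> (\<lambda>n. yy (int n))) (Suc n) j * e (int (Suc n) - int j))
     sums (yy (int (Suc n)) + (- \<beta> * rls_theta \<beta> (\<lambda>n. yy (int n)) n) * rls_x \<beta> (\<lambda>n. yy (int n)) n)"
    by (rule rep_step[OF MA Suc.IH]) (rule kappa_x_Suc, rule Suc.hyps)
  then show ?case by (simp add: n rls_SS)
qed

lemma rep_phi:
  fixes e yy :: "int \<Rightarrow> real"
  assumes MA: "\<And>t. (\<lambda>s. \<kappa> s * e (t - int s)) sums yy t" and t: "1 \<le> t"
  shows "(\<lambda>j. kappa_phi \<beta> \<kappa> (rls_theta \<beta> (\<lambda>n. yy (int n))) t j * e (int t - int j))
           sums rls_phi \<beta> (\<lambda>n. yy (int n)) t"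
  using t
proof (induction t rule: nat_induct_at_least)
  case base
  then show ?case using MA[of 1] by (simp add: rls_1)
next
  case (Suc n)
  then obtain m where n: "n = Suc m" by (cases n) auto
  have "(\<lambda>j. kappa_phi \<beta> \<kappa> (rls_theta \<beta> (\<lambda>n. yy (int n))) (Suc n) j * e (int (Suc n) - int j))
     sums (rls_x \<beta> (\<lambda>n. yy (int n)) (Suc n) + (- rls_theta \<beta> (\<lambda>n. yy (int n)) n) * rls_phi \<beta> (\<lambda>n. yy (int n)) n)"
    by (rule rep_step[OF rep_x[OF MA] Suc.IH]) (simp_all add: n)
  then show ?case by (simp add: n rls_SS)
qed

lemma prod_bound:
  fixes q :: "nat \<Rightarrow> real"
  assumes Ks: "0 < Ks" and A: "1 \<le> A" and qK: "\<And>k. kstar < k \<Longrightarrow> \<bar>q k\<bar> \<le> Ks"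
    and qA: "\<And>k. \<bar>q k\<bar> \<le> A * Ks" and l: "l \<le> t"
  shows "\<bar>\<Prod>i = 1..l. q (t - i)\<bar> \<le> A ^ Suc kstar * Ks ^ l"
proof -
  have "\<bar>\<Prod>i = 1..l. q (t - i)\<bar> = (\<Prod>i = 1..l. \<bar>q (t - i)\<bar>)" by (simp add: abs_prod)
  also have "\<dots> \<le> (\<Prod>i = 1..l. Ks * (if t - i \<le> kstar then A else 1))"
  proof (rule prod_mono)
    fix i assume "i \<in> {1..l}"
    show "0 \<le> \<bar>q (t - i)\<bar> \<and> \<bar>q (t - i)\<bar> \<le> Ks * (if t - i \<le> kstar then A else 1)"
      using qK[of "t - i"] qA[of "t - i"] by (auto simp: mult.commute)
  qed
  also have "\<dots> = Ks ^ l * (\<Prod>i = 1..l. (if t - i \<le> kstar then A else 1))"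
    by (simp add: prod.distrib)
  also have "(\<Prod>i = 1..l. (if t - i \<le> kstar then A else 1)) = A ^ card ({1..l} \<inter> {i. t - i \<le> kstar})"
    by (simp add: prod.If_cases)
  also have "A ^ card ({1..l} \<inter> {i. t - i \<le> kstar}) \<le> A ^ Suc kstar"
  proof (rule power_increasing[OF _ A])
    have "{1..l} \<inter> {i. t - i \<le> kstar} \<subseteq> {t - kstar..t}" using l by auto
    then have "card ({1..l} \<inter> {i. t - i \<le> kstar}) \<le> card {t - kstar..t}" by (intro card_mono) auto
    then show "card ({1..l} \<inter> {i. t - i \<le> kstar}) \<le> Suc kstar" by simp
  qed
  finally show ?thesis using Ks by (simp add: mult.commute mult_left_mono)
qed

lemma convS_bound:
  fixes q :: "nat \<Rightarrow> real"
  assumes P: "\<And>l. l \<le> t - 1 \<Longrightarrow> \<bar>\<Prod>i = 1..l. q (t - i)\<bar> \<le> C * Ks ^ l"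
    and G: "\<And>t' j'. 1 \<le> t' \<Longrightarrow> \<bar>G t' j'\<bar> \<le> g j'"
    and t: "1 \<le> t" and Ks: "0 \<le> Ks" and g: "\<And>j. 0 \<le> g j" and C: "0 \<le> C"
  shows "\<bar>convS q G t j\<bar> \<le> C * (\<Sum>l\<le>j. Ks ^ l * g (j - l))"
proof -
  have "\<bar>convS q G t j\<bar> \<le> (\<Sum>l = 0..min j (t - 1). \<bar>(\<Prod>i = 1..l. q (t - i)) * G (t - l) (j - l)\<bar>)"
    unfolding convS_def by (rule sum_abs)
  also have "\<dots> \<le> (\<Sum>l = 0..min j (t - 1). C * Ks ^ l * g (j - l))"
  proof (rule sum_mono)
    fix l assume "l \<in> {0..min j (t - 1)}"
    then have l: "l \<le> t - 1" by auto
    have "\<bar>(\<Prod>i = 1..l. q (t - i)) * G (t - l) (j - l)\<bar> = \<bar>\<Prod>i = 1..l. q (t - i)\<bar> * \<bar>G (t - l) (j - l)\<bar>"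
      by (simp add: abs_mult)
    also have "\<dots> \<le> (C * Ks ^ l) * g (j - l)"
      using P[OF l] G[of "t - l" "j - l"] l t by (intro mult_mono) auto
    finally show "\<bar>(\<Prod>i = 1..l. q (t - i)) * G (t - l) (j - l)\<bar> \<le> C * Ks ^ l * g (j - l)" .
  qed
  also have "\<dots> \<le> (\<Sum>l = 0..j. C * Ks ^ l * g (j - l))"
    by (rule sum_mono2) (auto intro!: mult_nonneg_nonneg C g Ks zero_le_power)
  also have "\<dots> = C * (\<Sum>l\<le>j. Ks ^ l * g (j - l))"
    by (simp add: atLeast0AtMost sum_distrib_left mult.assoc)
  finally show ?thesis .
qed

lemma sums_abs_le:
  fixes f g :: "nat \<Rightarrow> real"
  assumes "f sums a" "g sums b" "\<And>n. \<bar>f n\<bar> \<le> g n"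
  shows "\<bar>a\<bar> \<le> b"
proof -
  have "a \<le> b" by (rule sums_le[OF _ assms(1,2)]) (metis abs_le_D1 assms(3))
  moreover have "- a \<le> b" by (rule sums_le[OF _ sums_minus[OF assms(1)] assms(2)]) (metis abs_le_D2 assms(3))
  ultimately show ?thesis by linarith
qed



lemma main_det:
  fixes e yy :: "int \<Rightarrow> real" and \<kappa> :: "nat \<Rightarrow> real"
  assumes MA: "\<And>t. (\<lambda>s. \<kappa> s * e (t - int s)) sums yy t"
    and eb: "\<And>t. \<bar>e t\<bar> \<le> K"
    and beta: "0 \<le> \<beta>" "\<beta> \<le> 1"
    and Ks: "0 < Ks" "Ks < 1"
    and thb: "\<And>t. 1 \<le> t \<Longrightarrow> \<bar>rls_theta \<beta> (\<lambda>n. yy (int n)) (t + kstar)\<bar> \<le> Ks"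
    and kabs: "summable (\<lambda>s. \<bar>\<kappa> s\<bar>)"
  shows "(\<lambda>u. limsup (\<lambda>t. ereal \<bar>(1 / real t) * (\<Sum>s = 1..t. (rls_phi \<beta> (\<lambda>n. yy (int n)) s)\<^sup>2)
                 - (1 / real t) * (\<Sum>s = 1..t.
                      (\<Sum>j = 0..u. kappa_phi \<beta> \<kappa> (rls_theta \<beta> (\<lambda>n. yy (int n))) s j * e (int s - int j))\<^sup>2)\<bar>))
         \<longlonglongrightarrow> 0"
proof -
  define Y where "Y = (\<lambda>n. yy (int n))"
  define \<theta> where "\<theta> = rls_theta \<beta> Y"
  have K0: "0 \<le> K" using eb[of 0] by linarith
  define Mx where "Mx = Max ((\<lambda>k. \<bar>\<theta> k\<bar>) ` {..kstar})"
  define A where "A = max 1 (Mx / Ks)"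
  have A1: "1 \<le> A" by (simp add: A_def)
  have thK: "\<bar>\<theta> k\<bar> \<le> Ks" if "kstar < k" for k
    using thb[of "k - kstar"] that by (simp add: \<theta>_def Y_def)
  have thA: "\<bar>\<theta> k\<bar> \<le> A * Ks" for k
  proof (cases "k \<le> kstar")
    case True
    then have "\<bar>\<theta> k\<bar> \<le> Mx" unfolding Mx_def by (intro Max_ge) auto
    also have "Mx = (Mx / Ks) * Ks" using Ks by simp
    also have "\<dots> \<le> A * Ks" using Ks by (intro mult_right_mono) (auto simp: A_def)
    finally show ?thesis .
  next
    case False
    then have "\<bar>\<theta> k\<bar> \<le> Ks" by (intro thK) auto
    also have "\<dots> \<le> A * Ks" using A1 Ks by simp
    finally show ?thesis .
  qed
  define C where "C = A ^ Suc kstar"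
  have C0: "0 \<le> C" using A1 by (simp add: C_def)
  have P1: "\<bar>\<Prod>i = 1..l. - \<beta> * \<theta> (t - i)\<bar> \<le> C * Ks ^ l" if "l \<le> t - 1" for t l
  proof -
    have b: "\<bar>- \<beta> * \<theta> k\<bar> \<le> \<bar>\<theta> k\<bar>" for k
      using beta by (simp add: abs_mult mult_left_le_one_le)
    have c1: "\<bar>- \<beta> * \<theta> k\<bar> \<le> Ks" if "kstar < k" for k
      using b[of k] thK[OF that] by linarith
    have c2: "\<bar>- \<beta> * \<theta> k\<bar> \<le> A * Ks" for k
      using b[of k] thA[of k] by linarith
    have c3: "l \<le> t" using that by linarith
    show ?thesis unfolding C_def
      by (rule prod_bound[OF Ks(1) A1 c1 c2 c3])
  qed
  have P2: "\<bar>\<Prod>i = 1..l. - \<theta> (t - i)\<bar> \<le> C * Ks ^ l" if "l \<le> t - 1" for t l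
  proof -
    have c1: "\<bar>- \<theta> k\<bar> \<le> Ks" if "kstar < k" for k
      using thK[OF that] by simp
    have c2: "\<bar>- \<theta> k\<bar> \<le> A * Ks" for k
      using thA[of k] by simp
    have c3: "l \<le> t" using that by linarith
    show ?thesis unfolding C_def
      by (rule prod_bound[OF Ks(1) A1 c1 c2 c3])
  qed
  define w where "w j = (\<Sum>l\<le>j. Ks ^ l * \<bar>\<kappa> (j - l)\<bar>)" for j
  have w0: "0 \<le> w j" for j unfolding w_def using Ks by (intro sum_nonneg) auto
  have kx: "\<bar>kappa_x \<beta> \<kappa> \<theta> t j\<bar> \<le> C * w j" if "1 \<le> t" for t j
    unfolding kappa_x_convS w_def
    by (rule convS_bound[OF P1 _ that]) (use Ks C0 in auto)
  define V where "V j = C * (\<Sum>l\<le>j. Ks ^ l * (C * w (j - l)))" for j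
  have V0: "0 \<le> V j" for j unfolding V_def using Ks C0 w0 by (intro mult_nonneg_nonneg sum_nonneg) auto
  have kp: "\<bar>kappa_phi \<beta> \<kappa> \<theta> t j\<bar> \<le> V j" if "1 \<le> t" for t j
    unfolding kappa_phi_convS[OF that] V_def
    by (rule convS_bound[OF P2 kx that]) (use Ks C0 w0 in auto)
  have sg: "summable (\<lambda>k. norm (Ks ^ k))"
    using Ks by (simp add: summable_geometric)
  have sw: "summable w"
    unfolding w_def using summable_Cauchy_product[OF sg, of "\<lambda>k. \<bar>\<kappa> k\<bar>"] kabs by simp
  have sV: "summable V"
  proof -
    have "summable (\<lambda>k. norm (C * w k))" using sw C0 w0 by (simp add: abs_mult)
    from summable_Cauchy_product[OF sg this] show ?thesis
      unfolding V_def by (intro summable_mult) simp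
  qed
  have rep: "(\<lambda>j. kappa_phi \<beta> \<kappa> \<theta> s j * e (int s - int j)) sums rls_phi \<beta> Y s" if "1 \<le> s" for s
    unfolding \<theta>_def Y_def by (rule rep_phi[OF MA that])
  define T where "T u = K * (\<Sum>j. V (j + Suc u))" for u
  define Bp where "Bp = K * suminf V"
  have T0: "0 \<le> T u" for u unfolding T_def using K0 V0 by (intro mult_nonneg_nonneg suminf_nonneg summable_ignore_initial_segment sV) auto
  have Bp0: "0 \<le> Bp" unfolding Bp_def using K0 V0 sV by (intro mult_nonneg_nonneg suminf_nonneg) auto
  have termb: "\<bar>kappa_phi \<beta> \<kappa> \<theta> s j * e (int s - int j)\<bar> \<le> K * V j" if "1 \<le> s" for s j
    using kp[OF that, of j] eb[of "int s - int j"] K0 V0[of j]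
  proof -
    have "\<bar>kappa_phi \<beta> \<kappa> \<theta> s j\<bar> * \<bar>e (int s - int j)\<bar> \<le> V j * K"
      using kp[OF that, of j] eb[of "int s - int j"] K0 V0[of j] by (intro mult_mono) auto
    then show ?thesis by (simp add: abs_mult mult.commute)
  qed
  define tr where "tr s u = (\<Sum>j = 0..u. kappa_phi \<beta> \<kappa> \<theta> s j * e (int s - int j))" for s u
  have tail: "\<bar>rls_phi \<beta> Y s - tr s u\<bar> \<le> T u" if "1 \<le> s" for s u
  proof -
    have "(\<lambda>j. kappa_phi \<beta> \<kappa> \<theta> s (j + Suc u) * e (int s - int (j + Suc u))) sums
           (rls_phi \<beta> Y s - (\<Sum>j<Suc u. kappa_phi \<beta> \<kappa> \<theta> s j * e (int s - int j)))"
      using sums_split_initial_segment[OF rep[OF that], of "Suc u"] by simp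
    moreover have "(\<lambda>j. K * V (j + Suc u)) sums T u"
      unfolding T_def by (intro sums_mult summable_sums summable_ignore_initial_segment sV)
    ultimately have "\<bar>rls_phi \<beta> Y s - (\<Sum>j<Suc u. kappa_phi \<beta> \<kappa> \<theta> s j * e (int s - int j))\<bar> \<le> T u"
      by (rule sums_abs_le) (rule termb[OF that])
    then show ?thesis by (simp add: tr_def atLeast0AtMost lessThan_Suc_atMost)
  qed
  have phib: "\<bar>rls_phi \<beta> Y s\<bar> \<le> Bp" if "1 \<le> s" for s
    unfolding Bp_def
    by (rule sums_abs_le[OF rep[OF that] sums_mult[OF summable_sums[OF sV]] termb[OF that]])
  have trb: "\<bar>tr s u\<bar> \<le> Bp" if "1 \<le> s" for s u
  proof -
    have "\<bar>tr s u\<bar> \<le> (\<Sum>j = 0..u. \<bar>kappa_phi \<beta> \<kappa> \<theta> s j * e (int s - int j)\<bar>)"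
      unfolding tr_def by (rule sum_abs)
    also have "\<dots> \<le> (\<Sum>j = 0..u. K * V j)" by (intro sum_mono termb[OF that])
    also have "\<dots> \<le> (\<Sum>j. K * V j)"
      by (rule sum_le_suminf) (use sV K0 V0 in auto)
    also have "\<dots> = Bp" unfolding Bp_def by (rule suminf_mult[OF sV])
    finally show ?thesis .
  qed
  have sqb: "\<bar>(rls_phi \<beta> Y s)\<^sup>2 - (tr s u)\<^sup>2\<bar> \<le> 2 * Bp * T u" if "1 \<le> s" for s u
  proof -
    have "(rls_phi \<beta> Y s)\<^sup>2 - (tr s u)\<^sup>2 = (rls_phi \<beta> Y s - tr s u) * (rls_phi \<beta> Y s + tr s u)"
      by (simp add: power2_eq_square algebra_simps)
    then have "\<bar>(rls_phi \<beta> Y s)\<^sup>2 - (tr s u)\<^sup>2\<bar> = \<bar>rls_phi \<beta> Y s - tr s u\<bar> * \<bar>rls_phi \<beta> Y s + tr s u\<bar>"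
      by (simp add: abs_mult)
    also have "\<dots> \<le> T u * (2 * Bp)"
      using tail[OF that, of u] phib[OF that] trb[OF that, of u] T0[of u]
      by (intro mult_mono) auto
    finally show ?thesis by (simp add: mult_ac)
  qed
  define r where "r t u = (1 / real t) * (\<Sum>s = 1..t. (rls_phi \<beta> Y s)\<^sup>2) - (1 / real t) * (\<Sum>s = 1..t. (tr s u)\<^sup>2)" for t u
  have rb: "\<bar>r t u\<bar> \<le> 2 * Bp * T u" for t u
  proof (cases "t = 0")
    case True
    then show ?thesis using Bp0 T0[of u] by (simp add: r_def)
  next
    case False
    have "r t u = (1 / real t) * (\<Sum>s = 1..t. (rls_phi \<beta> Y s)\<^sup>2 - (tr s u)\<^sup>2)"
      by (simp add: r_def sum_subtractf right_diff_distrib)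
    then have "\<bar>r t u\<bar> = (1 / real t) * \<bar>\<Sum>s = 1..t. (rls_phi \<beta> Y s)\<^sup>2 - (tr s u)\<^sup>2\<bar>"
      by (simp add: abs_mult)
    also have "\<dots> \<le> (1 / real t) * (\<Sum>s = 1..t. 2 * Bp * T u)"
      by (intro mult_left_mono order_trans[OF sum_abs] sum_mono sqb) auto
    also have "\<dots> = 2 * Bp * T u" using False by simp
    finally show ?thesis .
  qed
  have Tlim: "T \<longlonglongrightarrow> 0"
  proof -
    have "(\<lambda>n. \<Sum>k. V (k + n)) \<longlonglongrightarrow> 0" by (rule suminf_exist_split2[OF sV])
    then have "(\<lambda>n. \<Sum>k. V (k + Suc n)) \<longlonglongrightarrow> 0" by (rule LIMSEQ_Suc)
    then have "(\<lambda>n. K * (\<Sum>k. V (k + Suc n))) \<longlonglongrightarrow> K * 0" by (intro tendsto_mult tendsto_const)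
    then show ?thesis by (simp add: T_def[abs_def])
  qed
  have upper: "(\<lambda>u. ereal (2 * Bp * T u)) \<longlonglongrightarrow> 0"
  proof -
    have "(\<lambda>u. 2 * Bp * T u) \<longlonglongrightarrow> 2 * Bp * 0" by (intro tendsto_mult tendsto_const Tlim)
    then show ?thesis by (simp add: zero_ereal_def tendsto_ereal)
  qed
  have "(\<lambda>u. limsup (\<lambda>t. ereal \<bar>r t u\<bar>)) \<longlonglongrightarrow> 0"
  proof (rule tendsto_sandwich[OF _ _ tendsto_const upper])
    show "\<forall>\<^sub>F u in sequentially. 0 \<le> limsup (\<lambda>t. ereal \<bar>r t u\<bar>)"
      by (intro always_eventually allI le_Limsup) auto
    show "\<forall>\<^sub>F u in sequentially. limsup (\<lambda>t. ereal \<bar>r t u\<bar>) \<le> ereal (2 * Bp * T u)"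
      by (intro always_eventually allI Limsup_bounded) (use rb in auto)
  qed
  then show ?thesis by (simp add: r_def tr_def \<theta>_def Y_def)
qed



theorem lemma4p2:
  fixes M :: "'a measure"
    and y \<epsilon> :: "int \<Rightarrow> 'a \<Rightarrow> real"
    and \<kappa> :: "nat \<Rightarrow> real"
    and \<sigma>2 K \<beta> :: real
  assumes prob: "prob_space M"
    \<comment> \<open>mean-zero covariance-stationary real series\<close>
    and y_meas: "\<And>t. y t \<in> borel_measurable M"
    and y_sq_int: "\<And>t. integrable M (\<lambda>\<omega>. (y t \<omega>)\<^sup>2)"
    and y_mean: "\<And>t. (\<integral>\<omega>. y t \<omega> \<partial>M) = 0"
    and y_cov: "\<And>t h. (\<integral>\<omega>. y (t + h) \<omega> * y t \<omega> \<partial>M) = (\<integral>\<omega>. y h \<omega> * y 0 \<omega> \<partial>M)"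
    \<comment> \<open>(D1)\<close>
    and D1: "AE \<omega> in M. (y 1 \<omega>)\<^sup>2 > 0"
    \<comment> \<open>(D2)\<close>
    and kappa0: "\<kappa> 0 = 1"
    and kappa_abs: "summable (\<lambda>s. \<bar>\<kappa> s\<bar>)"
    and kappa_nz: "\<And>z::complex. norm z \<le> 1 \<Longrightarrow> (\<Sum>s. complex_of_real (\<kappa> s) * z ^ s) \<noteq> 0"
    and y_MA: "AE \<omega> in M. \<forall>t. (\<lambda>s. \<kappa> s * \<epsilon> (t - int s) \<omega>) sums y t \<omega>"
    and eps_adapted: "\<And>t. \<epsilon> t \<in> borel_measurable (nat_filtration M y t)"
    and eps_int: "\<And>t. integrable M (\<epsilon> t)"
    and eps_mds: "\<And>t. AE \<omega> in M. real_cond_exp M (nat_filtration M y (t - 1)) (\<epsilon> t) \<omega> = 0"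
    \<comment> \<open>(D3)\<close>
    and D3: "\<And>t. AE \<omega> in M.
               real_cond_exp M (nat_filtration M y (t - 1)) (\<lambda>\<omega>'. (\<epsilon> t \<omega>')\<^sup>2) \<omega> = \<sigma>2"
    \<comment> \<open>(D4)\<close>
    and D4: "AE \<omega> in M. \<forall>t. \<bar>\<epsilon> t \<omega>\<bar> \<le> K"
    and beta: "0 \<le> \<beta>" "\<beta> \<le> 1"
    \<comment> \<open>eventual boundedness of theta_t strictly inside (-1,1)\<close>
    and theta_bd: "AE \<omega> in M. \<exists>(kstar::nat) (Kstar::real). 0 < Kstar \<and> Kstar < 1 \<and>
               (\<forall>t\<ge>1. \<bar>rls_theta \<beta> (\<lambda>n. y (int n) \<omega>) (t + kstar)\<bar> \<le> Kstar)"
  shows "AE \<omega> in M.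
    (let \<theta> = rls_theta \<beta> (\<lambda>n. y (int n) \<omega>);
         \<phi> = rls_phi \<beta> (\<lambda>n. y (int n) \<omega>);
         r1 = (\<lambda>t u. (1 / real t) * (\<Sum>s = 1..t. (\<phi> s)\<^sup>2)
                 - (1 / real t) * (\<Sum>s = 1..t.
                      (\<Sum>j = 0..u. kappa_phi \<beta> \<kappa> \<theta> s j * \<epsilon> (int s - int j) \<omega>)\<^sup>2))
     in (\<lambda>u. limsup (\<lambda>t. ereal \<bar>r1 t u\<bar>)) \<longlonglongrightarrow> 0)"
  proof -
  from y_MA D4 theta_bd show ?thesis
  proof eventually_elim
    case (elim \<omega>)
    then obtain kstar Kstar where k: "0 < Kstar" "Kstar < 1"
      "\<forall>t\<ge>1. \<bar>rls_theta \<beta> (\<lambda>n. y (int n) \<omega>) (t + kstar)\<bar> \<le> Kstar" by blast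
    have MA: "\<And>t. (\<lambda>s. \<kappa> s * \<epsilon> (t - int s) \<omega>) sums y t \<omega>" using elim by blast
    have eb: "\<And>t. \<bar>\<epsilon> t \<omega>\<bar> \<le> K" using elim by blast
    show ?case unfolding Let_def
      by (rule main_det[where e="\<lambda>t. \<epsilon> t \<omega>" and yy="\<lambda>t. y t \<omega>", OF MA eb beta k(1,2) _ kappa_abs])
         (use k(3) in blast)
  qed
qed

end
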